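(* Let $P_0,P_1,Q_2\in\mathbb H$ be pairwise distinct with $\langle P_0,P_1\rangle=\langle P_0,Q_2\rangle=\langle P_1,Q_2\rangle$, and let $R_2=\frac{P_0+P_1+Q_2}{\sqrt{-\langle P_0+P_1+Q_2,P_0+P_1+Q_2\rangle}}\in\mathbb H$ be its centroid. Then there is $\varepsilon_2\in\{-1,1\}$ such that $$R_2=\frac{\sqrt{1-2\langle P_0,P_1\rangle}\,(P_0+P_1)+\varepsilon_2\,P_0\tilde\times P_1}{\sqrt3\,\bigl(1-\langle P_0,P_1\rangle\bigr)}.$$
   Context: $\langle v,w\rangle=-v_1w_1+v_2w_2+v_3w_3$ on $\mathbb R^3$; $\mathbb H=\{P\in\mathbb R^3:\langle P,P\rangle=-1,\ P_1\ge1\}$; $v\tilde\times w:=J(v\times w)$ with $J=\mathrm{diag}(-1,1,1)$ and $\times$ the Euclidean cross product. *)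

theory Defs
  imports "HOL-Analysis.Analysis" "HOL-Analysis.Cross3"
begin

definition mink :: "real^3 \<Rightarrow> real^3 \<Rightarrow> real" where
  "mink v w = - (v$1 * w$1) + v$2 * w$2 + v$3 * w$3"

definition hyp :: "(real^3) set" where
  "hyp = {P. mink P P = -1 \<and> P$1 \<ge> 1}"

definition Jmap :: "real^3 \<Rightarrow> real^3" where
  "Jmap v = vector [- (v$1), v$2, v$3]"

definition lcross :: "real^3 \<Rightarrow> real^3 \<Rightarrow> real^3" where
  "lcross v w = Jmap (cross3 v w)"

end

theory Submission
  imports Defs
begin

lemma lcross_comp:
  "lcross a b $ 1 = - (a$2 * b$3 - a$3 * b$2)"
  "lcross a b $ 2 = a$3 * b$1 - a$1 * b$3"
  "lcross a b $ 3 = a$1 * b$2 - a$2 * b$1"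
  by (simp_all add: lcross_def Jmap_def cross3_def)

lemma hyp_comp: "P \<in> hyp \<Longrightarrow> (P$1)^2 = 1 + (P$2)^2 + (P$3)^2 \<and> P$1 \<ge> 1"
  by (auto simp: hyp_def mink_def power2_eq_square)

lemma rev_cs:
  fixes a1 a2 a3 b1 b2 b3 :: real
  assumes "a1^2 = 1 + a2^2 + a3^2" "b1^2 = 1 + b2^2 + b3^2" "a1 \<ge> 1" "b1 \<ge> 1"
    and "a1*b1 - a2*b2 - a3*b3 \<le> 1"
  shows "a2 = b2 \<and> a3 = b3 \<and> a1 = b1"
proof -
  have e: "(a1*b1)^2 - (1 + a2*b2 + a3*b3)^2 = (a2-b2)^2 + (a3-b3)^2 + (a2*b3 - a3*b2)^2"
    using assms(1,2) by (simp add: power_mult_distrib) (simp add: algebra_simps power2_eq_square)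
  have n1: "0 \<le> (a2-b2)^2" "0 \<le> (a3-b3)^2" "0 \<le> (a2*b3 - a3*b2)^2" by simp_all
  have "(1 + a2*b2 + a3*b3)^2 \<le> (a1*b1)^2" using e n1 by linarith
  moreover have "0 \<le> a1*b1" using assms(3,4) by simp
  ultimately have "1 + a2*b2 + a3*b3 \<le> a1*b1" using power2_le_imp_le by blast
  hence "0 \<le> a1*b1 - (1 + a2*b2 + a3*b3)" by linarith
  moreover have "a1*b1 - (1 + a2*b2 + a3*b3) \<le> 0" using assms(5) by linarith
  ultimately have z: "a1*b1 = 1 + a2*b2 + a3*b3" by linarith
  hence "(a2-b2)^2 + (a3-b3)^2 + (a2*b3 - a3*b2)^2 = 0" using e by simp
  hence "(a2-b2)^2 = 0" "(a3-b3)^2 = 0" using n1 by linarith+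
  hence "a2 = b2" "a3 = b3" by simp_all
  moreover have "a1 = b1"
  proof (rule power2_eq_imp_eq)
    show "a1^2 = b1^2" using assms(1,2) calculation by simp
  qed (use assms(3,4) in simp_all)
  ultimately show ?thesis by simp
qed

lemma core:
  fixes a1 a2 a3 b1 b2 b3 q1 q2 q3 t :: real
  assumes ha: "-a1*a1 + a2*a2 + a3*a3 = -1" and hb: "-b1*b1 + b2*b2 + b3*b3 = -1"
    and hq: "-q1*q1 + q2*q2 + q3*q3 = -1"
    and t: "t = -a1*b1 + a2*b2 + a3*b3" and qa: "-a1*q1 + a2*q2 + a3*q3 = t"
    and qb: "-b1*q1 + b2*q2 + b3*q3 = t" and tl: "t < -1"
  defines "\<alpha> \<equiv> -t/(1-t)"
  defines "c1 \<equiv> - (a2*b3 - a3*b2)" and "c2 \<equiv> a3*b1 - a1*b3" and "c3 \<equiv> a1*b2 - a2*b1"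
  shows "\<exists>\<gamma>. q1 = \<alpha>*(a1+b1) + \<gamma>*c1 \<and> q2 = \<alpha>*(a2+b2) + \<gamma>*c2 \<and> q3 = \<alpha>*(a3+b3) + \<gamma>*c3
     \<and> \<gamma>^2 = (1-2*t)/(1-t)^2"
proof -
  have nt: "1 - t \<noteq> 0" using tl by simp
  have al: "\<alpha> * (t - 1) = t" unfolding \<alpha>_def using nt by (simp add: field_simps)
  define w1 where "w1 = -(q1 - \<alpha>*(a1+b1))"
  define w2 where "w2 = q2 - \<alpha>*(a2+b2)"
  define w3 where "w3 = q3 - \<alpha>*(a3+b3)"
  define u1 where "u1 = a2*b3 - a3*b2"
  define u2 where "u2 = a3*b1 - a1*b3"
  define u3 where "u3 = a1*b2 - a2*b1"
  have wa: "w1*a1 + w2*a2 + w3*a3 = 0"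
  proof -
    have "w1*a1 + w2*a2 + w3*a3 = (-a1*q1 + a2*q2 + a3*q3) - \<alpha>*((-a1*a1 + a2*a2 + a3*a3) + t)"
      unfolding w1_def w2_def w3_def t by (simp add: algebra_simps)
    also have "\<dots> = t - \<alpha> * (t - 1)" using qa ha by simp
    finally show ?thesis using al by simp
  qed
  have wb: "w1*b1 + w2*b2 + w3*b3 = 0"
  proof -
    have "w1*b1 + w2*b2 + w3*b3 = (-b1*q1 + b2*q2 + b3*q3) - \<alpha>*((-b1*b1 + b2*b2 + b3*b3) + t)"
      unfolding w1_def w2_def w3_def t by (simp add: algebra_simps)
    also have "\<dots> = t - \<alpha> * (t - 1)" using qb hb by simp
    finally show ?thesis using al by simp
  qed
  have wa': "a1*w1+a2*w2+a3*w3 = 0" using wa by (simp add: algebra_simps)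
  have wb': "b1*w1+b2*w2+b3*w3 = 0" using wb by (simp add: algebra_simps)
  have x1: "u2*w3 - u3*w2 = (a1*w1+a2*w2+a3*w3)*b1 - (b1*w1+b2*w2+b3*w3)*a1"
    unfolding u1_def u2_def u3_def by (simp add: algebra_simps)
  have x2: "u3*w1 - u1*w3 = (a1*w1+a2*w2+a3*w3)*b2 - (b1*w1+b2*w2+b3*w3)*a2"
    unfolding u1_def u2_def u3_def by (simp add: algebra_simps)
  have x3: "u1*w2 - u2*w1 = (a1*w1+a2*w2+a3*w3)*b3 - (b1*w1+b2*w2+b3*w3)*a3"
    unfolding u1_def u2_def u3_def by (simp add: algebra_simps)
  have "u2*w3 - u3*w2 = 0" unfolding x1 wa' wb' by simp
  hence y1: "u2*w3 = u3*w2" by simp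
  have "u3*w1 - u1*w3 = 0" unfolding x2 wa' wb' by simp
  hence y2: "u3*w1 = u1*w3" by simp
  have "u1*w2 - u2*w1 = 0" unfolding x3 wa' wb' by simp
  hence y3: "u1*w2 = u2*w1" by simp
  have lag0: "-u1*u1 + u2*u2 + u3*u3 = t*t - (-a1*a1 + a2*a2 + a3*a3)*(-b1*b1 + b2*b2 + b3*b3)"
    unfolding u1_def u2_def u3_def t by (simp add: algebra_simps)
  have lag: "-u1*u1 + u2*u2 + u3*u3 = t*t - 1" using lag0 unfolding ha hb by simp
  have "(-t-1)*(1-t) > 0" using tl by (intro mult_pos_pos) simp_all
  hence tt: "t*t - 1 > 0" by (simp add: algebra_simps)
  define S where "S = u1*u1 + u2*u2 + u3*u3"
  have "\<not> (u1 = 0 \<and> u2 = 0 \<and> u3 = 0)" using lag tt by auto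
  hence "u1*u1 > 0 \<or> u2*u2 > 0 \<or> u3*u3 > 0" by (auto simp: zero_less_mult_iff)
  moreover have "u1*u1 \<ge> 0" "u2*u2 \<ge> 0" "u3*u3 \<ge> 0" by simp_all
  ultimately have Sp: "S > 0" unfolding S_def by linarith
  define g where "g = (w1*u1 + w2*u2 + w3*u3) / S"
  have "w1*S = u1*u1*w1 + u2*(u2*w1) + u3*(u3*w1)" unfolding S_def by (simp add: algebra_simps)
  also have "\<dots> = u1*(w1*u1 + w2*u2 + w3*u3)" using y2 y3 by (simp add: algebra_simps)
  finally have g1: "w1 = g*u1" unfolding g_def using Sp by (simp add: field_simps)
  have "w2*S = u1*(u1*w2) + u2*u2*w2 + u3*(u3*w2)" unfolding S_def by (simp add: algebra_simps)
  also have "\<dots> = u2*(w1*u1 + w2*u2 + w3*u3)" using y1 y3 by (simp add: algebra_simps)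
  finally have g2: "w2 = g*u2" unfolding g_def using Sp by (simp add: field_simps)
  have "w3*S = u1*(u1*w3) + u2*(u2*w3) + u3*u3*w3" unfolding S_def by (simp add: algebra_simps)
  also have "\<dots> = u3*(w1*u1 + w2*u2 + w3*u3)" using y1 y2 by (simp add: algebra_simps)
  finally have g3: "w3 = g*u3" unfolding g_def using Sp by (simp add: field_simps)
  have e1: "q1 = \<alpha>*(a1+b1) + g*c1" using g1 unfolding w1_def c1_def u1_def by (simp add: algebra_simps)
  have e2: "q2 = \<alpha>*(a2+b2) + g*c2" using g2 unfolding w2_def c2_def u2_def by (simp add: algebra_simps)
  have e3: "q3 = \<alpha>*(a3+b3) + g*c3" using g3 unfolding w3_def c3_def u3_def by (simp add: algebra_simps)
  have ac: "-a1*c1 + a2*c2 + a3*c3 = 0" unfolding c1_def c2_def c3_def by (simp add: algebra_simps)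
  have bc: "-b1*c1 + b2*c2 + b3*c3 = 0" unfolding c1_def c2_def c3_def by (simp add: algebra_simps)
  have cc: "-c1*c1 + c2*c2 + c3*c3 = t*t - 1" using lag unfolding c1_def c2_def c3_def u1_def u2_def u3_def
    by (simp add: algebra_simps)
  have "-1 = -q1*q1 + q2*q2 + q3*q3" using hq by simp
  also have "\<dots> = \<alpha>*\<alpha>*((-a1*a1 + a2*a2 + a3*a3) + (-b1*b1 + b2*b2 + b3*b3) + 2*t)
      + 2*\<alpha>*g*((-a1*c1 + a2*c2 + a3*c3) + (-b1*c1 + b2*c2 + b3*c3)) + g*g*(-c1*c1 + c2*c2 + c3*c3)"
    unfolding e1 e2 e3 t by (simp add: algebra_simps)
  also have "\<dots> = \<alpha>*\<alpha>*(2*t - 2) + g*g*(t*t-1)" unfolding ha hb ac bc cc by simp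
  finally have q: "-1 = \<alpha>*\<alpha>*(2*t - 2) + g*g*(t*t-1)" .
  have n2: "t + 1 \<noteq> 0" using tl by simp
  define d where "d = 1 - t"
  have nd: "d \<noteq> 0" using nt unfolding d_def .
  have "\<alpha>*\<alpha>*(2*t-2) = (t*t/(d*d))*((-2)*d)" unfolding \<alpha>_def d_def by simp
  also have "\<dots> = -2*t*t/d" using nd by (simp add: field_simps)
  finally have a2: "\<alpha>*\<alpha>*(2*t-2) = -2*t*t/(1-t)" unfolding d_def .
  have "g*g*(t*t-1) = -1 + 2*t*t/(1-t)" using q a2 by simp
  also have "\<dots> = (2*t-1)*(t+1)/(1-t)" using nt by (simp add: field_simps)
  finally have "(g*g*(t-1))*(t+1) = ((2*t-1)/(1-t))*(t+1)" by (simp add: algebra_simps)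
  hence "g*g*(t-1) = (2*t-1)/(1-t)" using mult_right_cancel[OF n2] by blast
  hence "g*g*(t-1)*(1-t) = 2*t-1" using nt by (simp add: field_simps)
  hence "g*g*(1-t)^2 = 1-2*t" by (simp add: power2_eq_square algebra_simps)
  hence e: "g^2 * (1-t)^2 = 1-2*t" by (simp add: power2_eq_square)
  have nz: "(1-t)^2 \<noteq> 0" using nt by simp
  have "g^2 = (1-2*t)/(1-t)^2" using e nz by (simp add: eq_divide_eq)
  thus ?thesis using e1 e2 e3 by blast
qed

lemma fin_scalar:
  fixes x c s3 r t \<gamma> \<epsilon> :: real
  assumes "r > 0" "s3 > 0" "t < -1" "r^2 = 1 - 2*t" "\<gamma> = \<epsilon> * r / (1-t)"
  shows "(1/(s3*r)) * (x + ((-t/(1-t))*x + \<gamma>*c)) = (1/(s3*(1-t))) * (r*x + \<epsilon>*c)"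
proof -
  have nt: "1 - t \<noteq> 0" using assms(3) by simp
  have a1: "x + (-t/(1-t))*x = (1-2*t)*x/(1-t)" using nt by (simp add: field_simps)
  have "x + ((-t/(1-t))*x + \<gamma>*c) = (x + (-t/(1-t))*x) + \<gamma>*c" by simp
  also have "\<dots> = (r^2 * x + \<epsilon>*r*c)/(1-t)"
    unfolding a1 assms(4,5) using nt by (simp add: add_divide_distrib)
  also have "\<dots> = r * (r*x + \<epsilon>*c)/(1-t)" by (simp add: algebra_simps power2_eq_square)
  finally show ?thesis using assms(1,2) nt by (simp add: field_simps)
qed

theorem lemma2p4:
  fixes P0 P1 Q2 :: "real^3"
  assumes "P0 \<in> hyp" and "P1 \<in> hyp" and "Q2 \<in> hyp"
    and "P0 \<noteq> P1" and "P0 \<noteq> Q2" and "P1 \<noteq> Q2"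
    and "mink P0 P1 = mink P0 Q2" and "mink P0 Q2 = mink P1 Q2"
  shows "\<exists>\<epsilon>::real. \<epsilon> \<in> {-1, 1} \<and>
    (1 / sqrt (- mink (P0 + P1 + Q2) (P0 + P1 + Q2))) *\<^sub>R (P0 + P1 + Q2) =
    (1 / (sqrt 3 * (1 - mink P0 P1))) *\<^sub>R
      (sqrt (1 - 2 * mink P0 P1) *\<^sub>R (P0 + P1) + \<epsilon> *\<^sub>R lcross P0 P1)"
proof -
  define t where "t = mink P0 P1"
  have ha: "-(P0$1)*(P0$1) + (P0$2)*(P0$2) + (P0$3)*(P0$3) = -1" "P0$1 \<ge> 1"
    using assms(1) by (auto simp: hyp_def mink_def)
  have hb: "-(P1$1)*(P1$1) + (P1$2)*(P1$2) + (P1$3)*(P1$3) = -1" "P1$1 \<ge> 1"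
    using assms(2) by (auto simp: hyp_def mink_def)
  have hq: "-(Q2$1)*(Q2$1) + (Q2$2)*(Q2$2) + (Q2$3)*(Q2$3) = -1"
    using assms(3) by (auto simp: hyp_def mink_def)
  have tdef: "t = -(P0$1)*(P1$1) + (P0$2)*(P1$2) + (P0$3)*(P1$3)" unfolding t_def mink_def by simp
  have qa: "-(P0$1)*(Q2$1) + (P0$2)*(Q2$2) + (P0$3)*(Q2$3) = t"
    using assms(7) unfolding t_def mink_def by simp
  have qb: "-(P1$1)*(Q2$1) + (P1$2)*(Q2$2) + (P1$3)*(Q2$3) = t"
    using assms(7,8) unfolding t_def mink_def by simp
  have tl: "t < -1"
  proof (rule ccontr)
    assume "\<not> t < -1"
    hence le: "(P0$1)*(P1$1) - (P0$2)*(P1$2) - (P0$3)*(P1$3) \<le> 1" unfolding tdef by simp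
    have "P0$2 = P1$2 \<and> P0$3 = P1$3 \<and> P0$1 = P1$1"
      by (rule rev_cs[OF _ _ ha(2) hb(2) le]) (use ha hb in \<open>simp_all add: power2_eq_square\<close>)
    hence "P0 = P1" by (simp add: vec_eq_iff forall_3)
    thus False using assms(4) by simp
  qed
  obtain \<gamma> where
    e1: "Q2$1 = (-t/(1-t))*(P0$1+P1$1) + \<gamma>*(lcross P0 P1 $ 1)" and
    e2: "Q2$2 = (-t/(1-t))*(P0$2+P1$2) + \<gamma>*(lcross P0 P1 $ 2)" and
    e3: "Q2$3 = (-t/(1-t))*(P0$3+P1$3) + \<gamma>*(lcross P0 P1 $ 3)" and
    g2: "\<gamma>^2 = (1-2*t)/(1-t)^2"
    using core[OF ha(1) hb(1) hq tdef qa qb tl] unfolding lcross_comp by blast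
  define r where "r = sqrt (1 - 2*t)"
  have rp: "r > 0" unfolding r_def using tl by simp
  have r2: "r^2 = 1 - 2*t" unfolding r_def using tl by simp
  define \<epsilon> :: real where "\<epsilon> = (if \<gamma> \<ge> 0 then 1 else -1)"
  have "\<bar>\<gamma>\<bar> = sqrt (\<gamma>^2)" by simp
  also have "\<dots> = r / (1-t)" unfolding g2 r_def using tl by (simp add: real_sqrt_divide)
  finally have ga: "\<bar>\<gamma>\<bar> = r/(1-t)" .
  have gam: "\<gamma> = \<epsilon> * r / (1-t)" unfolding \<epsilon>_def using ga by (auto split: if_splits)
  have SS: "- mink (P0 + P1 + Q2) (P0 + P1 + Q2) = 3*(1-2*t)"
  proof -
    have "mink (P0 + P1 + Q2) (P0 + P1 + Q2) =
      (-(P0$1)*(P0$1) + (P0$2)*(P0$2) + (P0$3)*(P0$3)) + (-(P1$1)*(P1$1) + (P1$2)*(P1$2) + (P1$3)*(P1$3))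
      + (-(Q2$1)*(Q2$1) + (Q2$2)*(Q2$2) + (Q2$3)*(Q2$3)) + 2*(-(P0$1)*(P1$1) + (P0$2)*(P1$2) + (P0$3)*(P1$3))
      + 2*(-(P0$1)*(Q2$1) + (P0$2)*(Q2$2) + (P0$3)*(Q2$3)) + 2*(-(P1$1)*(Q2$1) + (P1$2)*(Q2$2) + (P1$3)*(Q2$3))"
      unfolding mink_def by (simp add: algebra_simps)
    also have "\<dots> = -3 + 6*t" unfolding ha(1) hb(1) hq qa qb tdef[symmetric] by simp
    finally show ?thesis by simp
  qed
  have sq: "sqrt (- mink (P0 + P1 + Q2) (P0 + P1 + Q2)) = sqrt 3 * r"
    unfolding SS r_def by (rule real_sqrt_mult)
  have s3: "sqrt 3 > (0::real)" by simp
  note F = fin_scalar[OF rp s3 tl r2 gam]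
  have "(1 / (sqrt 3 * r)) *\<^sub>R (P0 + P1 + Q2) =
    (1 / (sqrt 3 * (1 - t))) *\<^sub>R (r *\<^sub>R (P0 + P1) + \<epsilon> *\<^sub>R lcross P0 P1)"
  proof -
    have c1: "(P0+P1+Q2)$1 = (P0$1+P1$1) + ((-t/(1-t))*(P0$1+P1$1) + \<gamma>*(lcross P0 P1 $ 1))"
      using e1 by simp
    have c2: "(P0+P1+Q2)$2 = (P0$2+P1$2) + ((-t/(1-t))*(P0$2+P1$2) + \<gamma>*(lcross P0 P1 $ 2))"
      using e2 by simp
    have c3: "(P0+P1+Q2)$3 = (P0$3+P1$3) + ((-t/(1-t))*(P0$3+P1$3) + \<gamma>*(lcross P0 P1 $ 3))"
      using e3 by simp
    show ?thesis
      unfolding vec_eq_iff forall_3 vector_scaleR_component vector_add_component[of "r *\<^sub>R (P0 + P1)"]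
        vector_scaleR_component c1 c2 c3
      using F[of "P0$1+P1$1" "lcross P0 P1 $ 1"] F[of "P0$2+P1$2" "lcross P0 P1 $ 2"]
        F[of "P0$3+P1$3" "lcross P0 P1 $ 3"] by simp
  qed
  moreover have "\<epsilon> \<in> {-1, 1}" unfolding \<epsilon>_def by simp
  ultimately show ?thesis unfolding sq r_def t_def by blast
qed

end
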